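(* Let $z\in\mathbb{C}$, let $s\ge 2$ be an integer and $a$ a parameter for which $\Phi(z,s,a)$ is defined. If the integral converges, then \[ \frac{(s-2)(-1)^s}{s}\,\Phi(z,s,a)\,\Gamma(s)=\int_0^1\!\!\int_0^1\frac{(xy)^{a-1}}{(1-zxy)\log(xy)}\sum_{k=1}^{s-2}\binom{s-1}{k}\log^k(x)\log^{s-k-1}(y)\,dx\,dy. \]
   Context: The Lerch transcendent is $\Phi(z,s,a)=\sum_{k=0}^\infty \frac{z^k}{(k+a)^s}$ (where this series converges); $\Gamma$ is Euler's gamma function. *)

theory Defs
  imports "HOL-Analysis.Analysis"
begin

definition lerch_phi :: "complex \<Rightarrow> nat \<Rightarrow> complex \<Rightarrow> complex" where
  "lerch_phi z s a = (\<Sum>k. z ^ k / (of_nat k + a) ^ s)"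

definition lerch_integrand :: "complex \<Rightarrow> nat \<Rightarrow> complex \<Rightarrow> real \<times> real \<Rightarrow> complex" where
  "lerch_integrand z s a p = (let x = fst p; y = snd p in
     (of_real (x * y)) powr (a - 1) / ((1 - z * of_real (x * y)) * of_real (ln (x * y)))
     * (\<Sum>k=1..s-2. of_nat ((s - 1) choose k) * of_real (ln x ^ k * ln y ^ (s - k - 1))))"

end

theory Submission
  imports Defs "HOL-Real_Asymp.Real_Asymp"
begin



definition Pf :: "nat \<Rightarrow> real \<Rightarrow> real \<Rightarrow> real" where
  "Pf s x y = (\<Sum>k=1..s-2. real ((s-1) choose k) * (ln x ^ k * ln y ^ (s-k-1)))"

definition gfun :: "nat \<Rightarrow> complex \<Rightarrow> real \<times> real \<Rightarrow> complex" where
  "gfun s b u = of_real (fst u * snd u) powr (b-1) / of_real (ln (fst u * snd u)) * of_real (Pf s (fst u) (snd u))"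

lemma binom_split:
  fixes L M :: real
  shows "(\<Sum>k=1..m. real (Suc m choose k) * (L ^ k * M ^ (Suc m - k))) = (L + M)^Suc m - L^Suc m - M^Suc m"
proof -
  have "(L + M)^Suc m = (\<Sum>k\<le>Suc m. real (Suc m choose k) * L ^ k * M ^ (Suc m - k))"
    by (rule binomial_ring)
  also have "\<dots> = (\<Sum>k\<le>m. real (Suc m choose k) * L ^ k * M ^ (Suc m - k)) + L ^ Suc m"
    unfolding sum.atMost_Suc by simp
  also have "(\<Sum>k\<le>m. real (Suc m choose k) * L ^ k * M ^ (Suc m - k)) =
             M ^ Suc m + (\<Sum>k=1..m. real (Suc m choose k) * L ^ k * M ^ (Suc m - k))"
    by (simp add: atMost_atLeast0 sum.atLeast_Suc_atMost)
  finally show ?thesis by (simp add: mult.assoc)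
qed

lemma Pf_binom:
  assumes "s \<ge> 2"
  shows "Pf s x y = (ln x + ln y)^(s-1) - ln x^(s-1) - ln y^(s-1)"
proof -
  obtain m where s: "s = Suc (Suc m)" using assms by (metis add_2_eq_Suc le_Suc_ex)
  have "Pf s x y = (\<Sum>k=1..m. real (Suc m choose k) * (ln x ^ k * ln y ^ (Suc m - k)))"
    unfolding Pf_def s by (intro sum.cong) auto
  also have "\<dots> = (ln x + ln y)^(s-1) - ln x^(s-1) - ln y^(s-1)"
    unfolding binom_split s by simp
  finally show ?thesis .
qed

lemma inner_FTC:
  fixes p :: real
  assumes p: "0 < p" "p < 1" and s: "s \<ge> 2"
  shows "(\<integral>x. indicator {p..1} x *\<^sub>R ((ln p ^ (s-1) - ln x ^ (s-1) - (ln p - ln x) ^ (s-1)) / x) \<partial>lborel)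
         = - (real (s-2) / real s) * ln p ^ s"
proof -
  define F where "F = (\<lambda>x. ln p ^ (s-1) * ln x - ln x ^ s / real s + (ln p - ln x) ^ s / real s)"
  have "(\<integral>x. indicator {p..1} x *\<^sub>R ((ln p ^ (s-1) - ln x ^ (s-1) - (ln p - ln x) ^ (s-1)) / x) \<partial>lborel)
        = F 1 - F p"
  proof (rule integral_FTC_atLeastAtMost)
    show "p \<le> 1" using p by simp
    fix x assume x: "p \<le> x" "x \<le> 1"
    then have x0: "x > 0" using p by simp
    have "(F has_real_derivative ((ln p ^ (s-1) - ln x ^ (s-1) - (ln p - ln x) ^ (s-1)) / x)) (at x)"
      unfolding F_def using x0 s
      by (auto intro!: derivative_eq_intros simp: diff_divide_distrib)
    then show "(F has_vector_derivative ((ln p ^ (s-1) - ln x ^ (s-1) - (ln p - ln x) ^ (s-1)) / x)) (at x within {p..1})"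
      by (simp add: has_real_derivative_iff_has_vector_derivative has_vector_derivative_at_within)
  next
    show "continuous_on {p..1} (\<lambda>x. (ln p ^ (s-1) - ln x ^ (s-1) - (ln p - ln x) ^ (s-1)) / x)"
      using p by (auto intro!: continuous_intros)
  qed
  also have "F 1 - F p = - (real (s-2) / real s) * ln p ^ s"
  proof -
    obtain m where sm: "s = Suc (Suc m)" using s by (metis add_2_eq_Suc le_Suc_ex)
    have d: "real (Suc (Suc m)) \<noteq> 0" by simp
    show ?thesis unfolding F_def sm
      by (simp only: ln_one power_0_Suc diff_zero diff_self) (simp add: divide_simps d, simp add: algebra_simps)
  qed
  finally show ?thesis .
qed

lemma inner_val:
  fixes b :: complex
  assumes s: "s \<ge> 3"
  shows "(\<integral>x. (indicator ({0<..<1} \<times> {0<..<1}) (x, p/x) *\<^sub>R gfun s b (x, p/x)) / of_real x \<partial>lborel)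
     = indicator {0<..<1} p *\<^sub>R (- of_real (real (s-2) / real s) * (of_real p powr (b-1) * of_real (ln p ^ (s-1))))"
proof (cases "p \<in> {0<..<1}")
  case False
  have "indicator ({0<..<1} \<times> {0<..<1}) (x, p/x) = (0::real)" for x
  proof -
    have "\<not> (0 < x \<and> x < 1 \<and> 0 < p / x \<and> p / x < 1)"
    proof
      assume h: "0 < x \<and> x < 1 \<and> 0 < p / x \<and> p / x < 1"
      then have "0 < p" "p < x" by (auto simp: divide_less_eq_1_pos zero_less_divide_iff)
      then show False using False h by auto
    qed
    then have "(x, p/x) \<notin> {0<..<1} \<times> {0<..<1}" by auto
    then show ?thesis by simp
  qed
  then show ?thesis using False by simp
next
  case True
  then have p: "0 < p" "p < 1" by auto
  have lp: "ln p < 0" using p by simp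
  define cp where "cp = of_real p powr (b-1) / of_real (ln p)"
  define R where "R = (\<lambda>x. (ln p ^ (s-1) - ln x ^ (s-1) - (ln p - ln x) ^ (s-1)) / x)"
  have pw: "(indicator ({0<..<1} \<times> {0<..<1}) (x, p/x) *\<^sub>R gfun s b (x, p/x)) / of_real x
            = indicator {p<..<1} x *\<^sub>R (cp * of_real (R x))" for x
  proof (cases "x \<in> {p<..<1}")
    case True
    then have x: "0 < x" "p < x" "x < 1" using p by auto
    have in1: "(x, p/x) \<in> {0<..<1} \<times> {0<..<1}" using x p by (auto simp: divide_less_eq_1_pos)
    have xp: "x * (p / x) = p" using x by simp
    have PF: "Pf s x (p/x) = ln p ^ (s-1) - ln x ^ (s-1) - (ln p - ln x) ^ (s-1)"
      using s x p by (simp add: Pf_binom ln_div)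
    have "indicator ({0<..<1} \<times> {0<..<1}) (x, p/x) = (1::real)" using in1 by simp
    moreover have "indicator {p<..<1} x = (1::real)" using True by simp
    moreover have "gfun s b (x, p/x) / of_real x = cp * of_real (R x)"
      unfolding gfun_def fst_conv snd_conv xp PF cp_def R_def by (simp add: divide_inverse mult_ac)
    ultimately show ?thesis by simp
  next
    case False
    have "\<not> (0 < x \<and> x < 1 \<and> 0 < p / x \<and> p / x < 1)"
    proof
      assume h: "0 < x \<and> x < 1 \<and> 0 < p / x \<and> p / x < 1"
      then have "p < x" by (auto simp: divide_less_eq_1_pos)
      then show False using False h by auto
    qed
    then have "(x, p/x) \<notin> {0<..<1} \<times> {0<..<1}" by auto
    then show ?thesis using False by simp
  qed
  have "(\<integral>x. (indicator ({0<..<1} \<times> {0<..<1}) (x, p/x) *\<^sub>R gfun s b (x, p/x)) / of_real x \<partial>lborel)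
        = (\<integral>x. indicator {p<..<1} x *\<^sub>R (cp * of_real (R x)) \<partial>lborel)"
    by (simp only: pw)
  also have "\<dots> = (\<integral>x. cp * of_real (indicator {p..1} x *\<^sub>R R x) \<partial>lborel)"
  proof (rule integral_cong_AE)
    show "AE x in lborel. indicator {p<..<1} x *\<^sub>R (cp * of_real (R x)) = cp * of_real (indicator {p..1} x *\<^sub>R R x)"
    proof -
      have I: "indicator {p<..<1} x = (indicator {p..1} x :: real)" if "x \<noteq> p" "x \<noteq> 1" for x
        using that by (auto simp: indicator_def)
      show ?thesis
        using AE_lborel_singleton[of p] AE_lborel_singleton[of 1]
        by eventually_elim (simp add: I scaleR_conv_of_real mult_ac)
    qed
  qed (unfold R_def, measurable)+
  also have "\<dots> = cp * of_real (- (real (s-2) / real s) * ln p ^ s)"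
  proof -
    have "(\<integral>x. cp * of_real (indicator {p..1} x *\<^sub>R R x) \<partial>lborel)
          = cp * of_real (\<integral>x. indicator {p..1} x *\<^sub>R R x \<partial>lborel)"
      by (simp only: integral_mult_right_zero integral_complex_of_real)
    also have "(\<integral>x. indicator {p..1} x *\<^sub>R R x \<partial>lborel) = - (real (s-2) / real s) * ln p ^ s"
      unfolding R_def by (rule inner_FTC[OF p]) (use s in simp)
    finally show ?thesis .
  qed
  also have "\<dots> = indicator {0<..<1} p *\<^sub>R (- of_real (real (s-2) / real s) * (of_real p powr (b-1) * of_real (ln p ^ (s-1))))"
  proof -
    obtain m where sm: "s = Suc m" using s by (cases s) auto
    have l0: "complex_of_real (ln p) \<noteq> 0" using lp by simp
    have ind: "indicator {0<..<1} p = (1::real)" using True by simp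
    show ?thesis unfolding cp_def sm ind
      using l0 by (simp add: field_simps)
  qed
  finally show ?thesis .
qed


lemma Fk_tendsto0:
  fixes c :: complex
  assumes "Re c > 0"
  shows "((\<lambda>t::real. of_real t powr c * of_real (ln t ^ k)) \<longlongrightarrow> 0) (at_right 0)"
proof -
  have r: "((\<lambda>t::real. t powr Re c * ln t ^ k) \<longlongrightarrow> 0) (at_right 0)"
    using assms by real_asymp
  have "((\<lambda>t::real. norm (of_real t powr c * of_real (ln t ^ k) :: complex)) \<longlongrightarrow> 0) (at_right 0)"
  proof (rule Lim_transform_eventually[OF tendsto_rabs_zero[OF r]])
    show "\<forall>\<^sub>F t in at_right 0. \<bar>t powr Re c * ln t ^ k\<bar> = norm (of_real t powr c * of_real (ln t ^ k) :: complex)"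
      by (rule eventually_mono[OF eventually_at_right_less[of 0]])
         (simp add: norm_mult norm_power norm_powr_real_powr abs_mult power_abs)
  qed
  thus ?thesis by (simp add: tendsto_norm_zero_iff)
qed

lemma Fk_cont:
  fixes c :: complex
  assumes "Re c > 0"
  shows "continuous_on {0..1} (\<lambda>t::real. of_real t powr c * of_real (ln t ^ k))"
  unfolding continuous_on_eq_continuous_within
proof (intro ballI)
  fix t :: real assume "t \<in> {0..1}"
  then have t: "0 \<le> t" "t \<le> 1" by auto
  show "continuous (at t within {0..1}) (\<lambda>t::real. of_real t powr c * of_real (ln t ^ k))"
  proof (cases "t = 0")
    case True
    have "at (0::real) within {0..1} = at_right 0"
      by (rule at_within_Icc_at_right) simp
    then show ?thesis using True Fk_tendsto0[OF assms, of k]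
      by (simp add: continuous_within)
  next
    case False
    then have "t > 0" using t by simp
    then have "isCont (\<lambda>t::real. of_real t powr c * of_real (ln t ^ k)) t"
      by (auto intro!: continuous_intros)
    then show ?thesis by (simp add: continuous_at_imp_continuous_within)
  qed
qed

lemma Jk:
  fixes c :: complex
  assumes "Re c > 0"
  shows "((\<lambda>t::real. of_real t powr (c - 1) * of_real (ln t ^ k)) has_integral
            ((-1)^k * fact k / c^(k+1))) {0..1}"
  using assms
proof (induction k)
  case 0
  have "((\<lambda>t. complex_of_real t powr (c - 1)) has_integral
            (of_real 1 powr c / c - of_real 0 powr c / c)) {0..1}" using 0
    by (intro fundamental_theorem_of_calculus_interior)
       (auto intro!: continuous_intros derivative_eq_intros has_vector_derivative_real_field)
  thus ?case using 0 by simp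
next
  case (Suc k)
  have c0: "c \<noteq> 0" using Suc by auto
  let ?F = "\<lambda>t::real. of_real t powr c * of_real (ln t ^ Suc k) :: complex"
  let ?f = "\<lambda>t::real. c * (of_real t powr (c - 1) * of_real (ln t ^ Suc k))
              + of_nat (Suc k) * (of_real t powr (c - 1) * of_real (ln t ^ k))"
  have "(?f has_integral (?F 1 - ?F 0)) {0..1}"
  proof (rule fundamental_theorem_of_calculus_interior)
    show "continuous_on {0..1} ?F" by (rule Fk_cont[OF Suc.prems])
    fix t :: real assume t: "t \<in> {0<..<1}"
    show "(?F has_vector_derivative ?f t) (at t)"
    proof -
      have t0: "t > 0" using t by simp
      have w: "complex_of_real t \<notin> \<real>\<^sub>\<le>\<^sub>0" using t0 by (auto simp: nonpos_Reals_def)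
      have "((\<lambda>w. w powr c * Ln w ^ Suc k) has_field_derivative
             (c * of_real t powr (c - 1) * Ln (of_real t) ^ Suc k +
              of_real t powr c * (of_nat (Suc k) * Ln (of_real t) ^ k * inverse (of_real t)))) (at (of_real t))"
        using w t0 apply (auto intro!: derivative_eq_intros)
        by (cases k) (auto simp: field_simps)
      also have "(c * of_real t powr (c - 1) * Ln (of_real t) ^ Suc k +
              of_real t powr c * (of_nat (Suc k) * Ln (of_real t) ^ k * inverse (of_real t))) = ?f t"
        using t0 by (simp add: Ln_of_real powr_diff field_simps)
      finally have D: "((\<lambda>t. of_real t powr c * Ln (of_real t) ^ Suc k) has_vector_derivative ?f t) (at t)"
        by (rule has_vector_derivative_real_field)
      show ?thesis
        apply (rule has_vector_derivative_transform_within_open[OF D, of "{0<..}"])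
        using t0 by (auto simp: Ln_of_real)
    qed
  qed simp
  hence A: "(?f has_integral 0) {0..1}" by simp
  have B: "((\<lambda>t. of_nat (Suc k) * (of_real t powr (c - 1) * of_real (ln t ^ k))) has_integral
            of_nat (Suc k) * ((-1)^k * fact k / c^(k+1))) {0..1}"
    by (rule has_integral_mult_right[OF Suc.IH[OF Suc.prems]])
  from has_integral_diff[OF A B]
  have "((\<lambda>t. c * (of_real t powr (c - 1) * of_real (ln t ^ Suc k))) has_integral
           - (of_nat (Suc k) * ((-1)^k * fact k / c^(k+1)))) {0..1}" by simp
  from has_integral_mult_right[OF this, of "1/c"]
  have I: "((\<lambda>t. of_real t powr (c - 1) * of_real (ln t ^ Suc k)) has_integral
           1/c * (- (of_nat (Suc k) * ((-1)^k * fact k / c^(k+1))))) {0..1}"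
    using c0 by simp
  have E: "1/c * (- (of_nat (Suc k) * ((-1)^k * fact k / c^(k+1)))) = (-1)^Suc k * fact (Suc k) / c^(Suc k+1)"
    using c0 by (simp add: field_simps)
  show ?case using I unfolding E .
qed


lemma Re_pos_of_integrable:
  fixes b :: complex
  assumes int: "integrable lborel (\<lambda>p::real. indicator {0<..<1} p *\<^sub>R (of_real p powr (b-1) * of_real (ln p ^ m) :: complex))"
  shows "Re b > 0"
proof (rule ccontr)
  assume "\<not> Re b > 0"
  then have rb: "Re b - 1 \<le> -1" by simp
  define h where "h = (\<lambda>p::real. indicator {0<..<1} p *\<^sub>R (of_real p powr (b-1) * of_real (ln p ^ m) :: complex))"
  define N where "N = (\<integral>p. norm (h p) \<partial>lborel)"
  have intn: "integrable lborel (\<lambda>p. norm (h p))" using int unfolding h_def by (rule integrable_norm)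
  have bound: "- 1 - ln e \<le> N" if e: "0 < e" "e < exp (-1)" for e :: real
  proof -
    have EQ: "(\<integral>p. indicator {e..exp (-1)} p *\<^sub>R (1 / p) \<partial>lborel) = ln (exp (-1)) - ln e"
    proof (rule integral_FTC_atLeastAtMost)
      show "e \<le> exp (-1)" using e by simp
      fix x assume "e \<le> x" "x \<le> exp (-1)"
      then have "x > 0" using e by simp
      then show "(ln has_vector_derivative 1 / x) (at x within {e..exp (- 1)})"
        by (auto intro!: derivative_eq_intros simp: has_real_derivative_iff_has_vector_derivative[symmetric] field_simps)
    next
      show "continuous_on {e..exp (- 1)} (\<lambda>x::real. 1 / x)"
        using e by (auto intro!: continuous_intros)
    qed
    have LE: "(\<integral>p. indicator {e..exp (-1)} p *\<^sub>R (1 / p) \<partial>lborel) \<le> N" unfolding N_def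
    proof (rule integral_mono)
      have "continuous_on {e..exp (- 1)} (\<lambda>p::real. 1 / p)"
        using e by (auto intro!: continuous_intros)
      from borel_integrable_atLeastAtMost'[OF this]
      show "integrable lborel (\<lambda>p. indicator {e..exp (- 1)} p *\<^sub>R (1 / p))"
        by (simp add: set_integrable_def)
      show "integrable lborel (\<lambda>p. norm (h p))" by (rule intn)
      fix p :: real
      show "indicator {e..exp (- 1)} p *\<^sub>R (1 / p) \<le> norm (h p)"
      proof (cases "p \<in> {e..exp (-1)}")
        case True
        then have p: "0 < p" "p \<le> exp (-1)" using e by auto
        have p1: "p < 1" using p(2) by (smt (verit) exp_less_one_iff)
        have "ln p \<le> ln (exp (-1))" using p by (subst ln_le_cancel_iff) auto
        then have lnp: "ln p \<le> -1" by simp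
        have "1 / p = p powr (-1)" using p by (simp add: powr_minus_divide)
        also have "\<dots> \<le> p powr (Re b - 1)" using p p1 rb by (intro powr_mono') auto
        also have "\<dots> \<le> p powr (Re b - 1) * \<bar>ln p\<bar> ^ m"
        proof -
          have "1 \<le> \<bar>ln p\<bar> ^ m" using lnp by (intro one_le_power) simp
          then show ?thesis by (simp add: mult_le_cancel_left1)
        qed
        also have "\<dots> = norm (h p)" using p p1
          by (simp add: h_def norm_mult norm_power norm_powr_real_powr)
        finally show ?thesis using True by simp
      qed (simp add: h_def)
    qed
    from EQ LE show ?thesis by simp
  qed
  have N0: "N \<ge> 0" unfolding N_def by simp
  have "- 1 - ln (exp (- N - 2)) \<le> N" by (rule bound) (use N0 in auto)
  then show False by simp
qed
lemma fubini_shear: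
  fixes G :: "real \<times> real \<Rightarrow> complex"
  assumes int: "integrable lborel G"
    and G0: "\<And>x y. x \<le> 0 \<Longrightarrow> G (x, y) = 0"
  defines "K \<equiv> (\<lambda>u. G (fst u, snd u / fst u) / of_real (fst u))"
  shows "integrable lborel (\<lambda>p. \<integral>x. K (x, p) \<partial>lborel)"
    and "integral\<^sup>L lborel G = (\<integral>p. (\<integral>x. K (x, p) \<partial>lborel) \<partial>lborel)"
proof -
  have intP: "integrable (lborel \<Otimes>\<^sub>M lborel) G" using int by (simp add: lborel_prod)
  have Gm[measurable]: "G \<in> borel_measurable (lborel \<Otimes>\<^sub>M lborel)"
    using intP by (rule borel_measurable_integrable)
  have Km[measurable]: "K \<in> borel_measurable (lborel \<Otimes>\<^sub>M lborel)"
    unfolding K_def by measurable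
  have A1: "(\<integral>p. K (x, p) \<partial>lborel) = (\<integral>y. G (x, y) \<partial>lborel)" for x
  proof (cases "x > 0")
    case True
    have "(\<integral>y. G (x, y) \<partial>lborel) = \<bar>1/x\<bar> *\<^sub>R (\<integral>p. G (x, 0 + (1/x) * p) \<partial>lborel)"
      using True by (intro lborel_integral_real_affine) simp
    also have "\<dots> = (\<integral>p. K (x, p) \<partial>lborel)"
      using True by (simp add: K_def scaleR_conv_of_real divide_inverse mult.commute)
    finally show ?thesis ..
  qed (simp add: K_def G0)
  have A2: "(\<integral>p. norm (K (x, p)) \<partial>lborel) = (\<integral>y. norm (G (x, y)) \<partial>lborel)" for x
  proof (cases "x > 0")
    case True
    have "(\<integral>y. norm (G (x, y)) \<partial>lborel) = \<bar>1/x\<bar> *\<^sub>R (\<integral>p. norm (G (x, 0 + (1/x) * p)) \<partial>lborel)"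
      using True by (intro lborel_integral_real_affine) simp
    also have "\<dots> = (\<integral>p. norm (K (x, p)) \<partial>lborel)"
      using True by (simp add: K_def norm_divide divide_inverse mult.commute norm_mult norm_inverse)
    finally show ?thesis ..
  qed (simp add: K_def G0)
  have A3: "integrable lborel (\<lambda>p. K (x, p))" if "integrable lborel (\<lambda>y. G (x, y))" for x
  proof (cases "x > 0")
    case True
    have "integrable lborel (\<lambda>p. G (x, 0 + (1/x) * p))"
      using True that by (subst lborel_integrable_real_affine_iff) auto
    then have "integrable lborel (\<lambda>p. G (x, 0 + (1/x) * p) / of_real x)"
      by (rule integrable_divide_zero)
    then show ?thesis by (simp add: K_def mult.commute divide_inverse)
  qed (simp add: K_def G0)
  have intK: "integrable (lborel \<Otimes>\<^sub>M lborel) K"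
  proof (rule lborel_pair.Fubini_integrable)
    show "K \<in> borel_measurable (lborel \<Otimes>\<^sub>M lborel)" by (rule Km)
    have "integrable lborel (\<lambda>x. \<integral>y. norm (G (x, y)) \<partial>lborel)"
      using lborel_pair.integrable_fst'[OF integrable_norm[OF intP]] by simp
    then show "integrable lborel (\<lambda>x. \<integral>p. norm (K (x, p)) \<partial>lborel)" by (simp add: A2)
    show "AE x in lborel. integrable lborel (\<lambda>p. K (x, p))"
      using lborel_pair.AE_integrable_fst'[OF intP] by (auto elim!: eventually_mono intro: A3)
  qed
  have intK': "integrable (lborel \<Otimes>\<^sub>M lborel) (\<lambda>(p, x). K (x, p))"
    using intK by (simp add: lborel_pair.integrable_product_swap_iff)
  show "integrable lborel (\<lambda>p. \<integral>x. K (x, p) \<partial>lborel)"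
    using lborel_pair.integrable_fst'[OF intK'] by simp
  have "integral\<^sup>L lborel G = integral\<^sup>L (lborel \<Otimes>\<^sub>M lborel) G" by (simp add: lborel_prod)
  also have "\<dots> = (\<integral>x. (\<integral>y. G (x, y) \<partial>lborel) \<partial>lborel)"
    by (rule lborel_pair.integral_fst'[OF intP, symmetric])
  also have "\<dots> = (\<integral>x. (\<integral>p. K (x, p) \<partial>lborel) \<partial>lborel)" by (simp add: A1)
  also have "\<dots> = integral\<^sup>L (lborel \<Otimes>\<^sub>M lborel) K"
    by (rule lborel_pair.integral_fst'[OF intK])
  also have "\<dots> = (\<integral>(p, x). K (x, p) \<partial>(lborel \<Otimes>\<^sub>M lborel))"
    by (rule lborel_pair.integral_product_swap[OF Km, symmetric])
  also have "\<dots> = (\<integral>p. (\<integral>x. K (x, p) \<partial>lborel) \<partial>lborel)"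
    using lborel_pair.integral_fst'[OF intK'] by simp
  finally show "integral\<^sup>L lborel G = (\<integral>p. (\<integral>x. K (x, p) \<partial>lborel) \<partial>lborel)" .
qed

lemma core:
  fixes b :: complex
  assumes s: "s \<ge> 3"
    and int: "set_integrable lborel ({0<..<1} \<times> {0<..<1}) (gfun s b)"
  shows "Re b > 0"
    and "set_lebesgue_integral lborel ({0<..<1} \<times> {0<..<1}) (gfun s b)
         = - of_real (real (s-2) / real s) * ((-1)^(s-1) * fact (s-1) / b^s)"
proof -
  define Q :: "(real \<times> real) set" where "Q = {0<..<1} \<times> {0<..<1}"
  define G where "G = (\<lambda>u. indicator Q u *\<^sub>R gfun s b u)"
  define c :: complex where "c = of_real (real (s-2) / real s)"
  define h0 where "h0 = (\<lambda>p::real. of_real p powr (b-1) * of_real (ln p ^ (s-1)) :: complex)"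
  have "real (s-2) / real s \<noteq> 0" using s by simp
  then have c0: "c \<noteq> 0" unfolding c_def by (simp only: of_real_eq_0_iff not_False_eq_True)
  have intG: "integrable lborel G" using int unfolding G_def Q_def set_integrable_def .
  have G0: "G (x, y) = 0" if "x \<le> 0" for x y using that by (simp add: G_def Q_def)
  note FS = fubini_shear[OF intG G0]
  have inner: "(\<integral>x. G (x, p/x) / of_real x \<partial>lborel) = indicator {0<..<1} p *\<^sub>R (- c * h0 p)" for p
    unfolding G_def Q_def c_def h0_def by (rule inner_val[OF s])
  have intH: "integrable lborel (\<lambda>p. indicator {0<..<1} p *\<^sub>R (- c * h0 p))"
    using FS(1) by (simp add: inner)
  have intH0: "integrable lborel (\<lambda>p. indicator {0<..<1} p *\<^sub>R h0 p)"
  proof -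
    have "integrable lborel (\<lambda>p. (indicator {0<..<1} p *\<^sub>R (- c * h0 p)) / (- c))"
      using intH by (rule integrable_divide_zero)
    then show ?thesis using c0 by (simp add: scaleR_conv_of_real)
  qed
  show rb: "Re b > 0"
    using intH0 unfolding h0_def by (rule Re_pos_of_integrable)
  have "set_lebesgue_integral lborel ({0<..<1} \<times> {0<..<1}) (gfun s b) = integral\<^sup>L lborel G"
    unfolding set_lebesgue_integral_def G_def Q_def ..
  also have "\<dots> = (\<integral>p. indicator {0<..<1} p *\<^sub>R (- c * h0 p) \<partial>lborel)"
    using FS(2) by (simp add: inner)
  also have "\<dots> = - c * (\<integral>p. indicator {0<..<1} p *\<^sub>R h0 p \<partial>lborel)"
    by (simp add: scaleR_conv_of_real mult_ac)
  also have "(\<integral>p. indicator {0<..<1} p *\<^sub>R h0 p \<partial>lborel) = set_lebesgue_integral lborel {0<..<1} h0"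
    unfolding set_lebesgue_integral_def ..
  also have "\<dots> = integral {0<..<1} h0"
    by (rule set_borel_integral_eq_integral(2)) (use intH0 in \<open>simp add: set_integrable_def\<close>)
  also have "\<dots> = (-1)^(s-1) * fact (s-1) / b^s"
  proof -
    have "(h0 has_integral ((-1)^(s-1) * fact (s-1) / b^(s-1+1))) {0..1}"
      unfolding h0_def by (rule Jk[OF rb])
    then have "(h0 has_integral ((-1)^(s-1) * fact (s-1) / b^s)) {0<..<1}"
      using s by (simp add: has_integral_Icc_iff_Ioo)
    then show ?thesis by (rule integral_unique)
  qed
  finally show "set_lebesgue_integral lborel ({0<..<1} \<times> {0<..<1}) (gfun s b)
         = - of_real (real (s-2) / real s) * ((-1)^(s-1) * fact (s-1) / b^s)"
    unfolding c_def .
qed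


lemma lerch_eq: "lerch_integrand z s a u = gfun s a u / (1 - z * of_real (fst u * snd u))"
  unfolding lerch_integrand_def gfun_def Pf_def Let_def
  by (simp add: of_real_sum divide_inverse mult_ac)

lemma exp_beats_poly:
  fixes r A :: real
  assumes "r > 1" "A > 0"
  shows "filterlim (\<lambda>k::nat. r ^ k / (real k + A) ^ s) at_top at_top"
  using assms by real_asymp

lemma z_le_1:
  fixes z a :: complex
  assumes sm: "summable (\<lambda>k. z ^ k / (of_nat k + a) ^ s)" and nz: "\<forall>k::nat. of_nat k + a \<noteq> 0"
  shows "norm z \<le> 1"
proof (rule ccontr)
  assume "\<not> norm z \<le> 1"
  then have r: "norm z > 1" by simp
  define A where "A = norm a + 1"
  have A: "A > 0" unfolding A_def by (simp add: add_nonneg_pos)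
  have "filterlim (\<lambda>k::nat. norm z ^ k / (real k + A) ^ s) at_top at_top"
    using exp_beats_poly[OF r A] .
  then have ev: "eventually (\<lambda>k::nat. norm z ^ k / (real k + A) ^ s \<ge> 1) at_top"
    by (simp add: filterlim_at_top)
  have "eventually (\<lambda>k::nat. norm (z ^ k / (of_nat k + a) ^ s) \<ge> 1) at_top"
  proof (rule eventually_mono[OF ev])
    fix k :: nat assume h: "norm z ^ k / (real k + A) ^ s \<ge> 1"
    have n0: "norm (of_nat k + a) > 0" using nz by simp
    have "norm (of_nat k + a) \<le> real k + A"
      using norm_triangle_ineq[of "of_nat k" a] by (simp add: A_def)
    then have "norm (of_nat k + a) ^ s \<le> (real k + A) ^ s"
      by (intro power_mono) simp_all
    then have "norm z ^ k / (real k + A) ^ s \<le> norm z ^ k / norm (of_nat k + a) ^ s"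
      using n0 A by (intro divide_left_mono) (auto intro!: mult_pos_pos zero_less_power add_nonneg_pos)
    then show "norm (z ^ k / (of_nat k + a) ^ s) \<ge> 1"
      using h by (simp add: norm_divide norm_power)
  qed
  moreover have "((\<lambda>k. norm (z ^ k / (of_nat k + a) ^ s)) \<longlongrightarrow> 0) sequentially"
    using summable_LIMSEQ_zero[OF sm] by (simp add: tendsto_norm_zero_iff)
  then have "eventually (\<lambda>k. norm (z ^ k / (of_nat k + a) ^ s) < 1) sequentially"
    by (rule order_tendstoD(2)) simp
  ultimately have "eventually (\<lambda>k::nat. False) sequentially"
    by eventually_elim simp
  then show False by simp
qed


lemma xy_lt1: "0 < x \<Longrightarrow> x < 1 \<Longrightarrow> 0 < y \<Longrightarrow> y < 1 \<Longrightarrow> x * y < (1::real)"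
  using mult_strict_mono[of x 1 y 1] by simp

lemma powr_shift:
  fixes a :: complex
  assumes t: "t > 0"
  shows "complex_of_real t powr (a + of_nat n - 1) = of_real t ^ n * of_real t powr (a - 1)"
proof -
  have "a + of_nat n - 1 = (a - 1) + of_nat n" by simp
  then have "complex_of_real t powr (a + of_nat n - 1) = of_real t powr (a - 1) * of_real t powr of_nat n"
    by (simp only: powr_add)
  also have "of_real t powr of_nat n = (of_real t ^ n :: complex)" using t by (simp add: powr_nat')
  finally show ?thesis by (simp add: mult.commute)
qed

theorem theorem3p4:
  fixes z a :: complex and s :: nat
  assumes "s \<ge> 2"
    and "\<forall>k::nat. of_nat k + a \<noteq> 0"
    and "summable (\<lambda>k. z ^ k / (of_nat k + a) ^ s)"
    and "set_integrable lborel ({0<..<1} \<times> {0<..<1}) (lerch_integrand z s a)"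
  shows "of_nat (s - 2) * (-1) ^ s / of_nat s * lerch_phi z s a * Gamma (of_nat s)
         = set_lebesgue_integral lborel ({0<..<1} \<times> {0<..<1}) (lerch_integrand z s a)"
proof (cases "s = 2")
  case True
  have "lerch_integrand z s a = (\<lambda>_. 0)"
    using True by (simp add: lerch_integrand_def fun_eq_iff)
  then show ?thesis using True by (simp add: set_lebesgue_integral_def)
next
  case False
  then have s: "s \<ge> 3" using assms(1) by simp
  define Q :: "(real \<times> real) set" where "Q = {0<..<1} \<times> {0<..<1}"
  define w where "w = (\<lambda>u::real \<times> real. z * of_real (fst u * snd u))"
  define F where "F = (\<lambda>u. indicator Q u *\<^sub>R lerch_integrand z s a u)"
  define C :: complex where "C = - of_real (real (s-2) / real s) * ((-1)^(s-1) * fact (s-1))"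
  have z1: "norm z \<le> 1" by (rule z_le_1[OF assms(3) assms(2)])
  have intF: "integrable lborel F" using assms(4) unfolding F_def Q_def set_integrable_def .
  have Fm[measurable]: "F \<in> borel_measurable lborel" using intF by (rule borel_measurable_integrable)
  have wlt: "norm (w u) < 1" if "u \<in> Q" for u
  proof -
    have "0 < fst u * snd u" "fst u * snd u < 1" using that
      by (auto simp: Q_def mult_pos_pos xy_lt1)
    then have "norm (w u) = norm z * (fst u * snd u)" by (simp add: w_def norm_mult abs_mult[symmetric])
    also have "\<dots> \<le> fst u * snd u"
      using z1 \<open>0 < fst u * snd u\<close> by (intro mult_left_le_one_le) auto
    also have "\<dots> < 1" by fact
    finally show ?thesis .
  qed
  define Gn where "Gn = (\<lambda>n u. indicator Q u *\<^sub>R gfun s (a + of_nat n) u)"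
  have Gn_eq: "Gn n u = of_real (fst u * snd u) ^ n * (1 - w u) * F u" for n u
  proof (cases "u \<in> Q")
    case True
    then have xy: "0 < fst u * snd u" by (auto simp: Q_def mult_pos_pos)
    have w1: "1 - w u \<noteq> 0" using wlt[OF True] by auto
    have "gfun s (a + of_nat n) u = of_real (fst u * snd u) ^ n * gfun s a u"
      unfolding gfun_def powr_shift[OF xy] by (simp add: divide_inverse mult_ac del: of_real_mult)
    then show ?thesis using True w1 unfolding Gn_def F_def lerch_eq w_def by simp
  qed (simp add: Gn_def F_def)
  have intGn: "integrable lborel (Gn n)" for n
  proof (rule Bochner_Integration.integrable_bound[OF _ _ AE_I2])
    show "integrable lborel (\<lambda>u. 2 * norm (F u))" using intF by simp
    have Pm: "(\<lambda>u::real\<times>real. of_real (fst u * snd u) ^ n * (1 - w u)) \<in> borel_measurable lborel"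
      unfolding w_def by (simp only: measurable_lborel2) (intro borel_measurable_continuous_onI continuous_intros)
    show "Gn n \<in> borel_measurable lborel" unfolding Gn_eq[abs_def] by (rule borel_measurable_times[OF Pm Fm])
    fix u
    show "norm (Gn n u) \<le> norm (2 * norm (F u))"
    proof (cases "u \<in> Q")
      case True
      then have xy: "0 < fst u * snd u" "fst u * snd u < 1" by (auto simp: Q_def mult_pos_pos xy_lt1)
      have "norm (of_real (fst u * snd u) ^ n :: complex) \<le> 1"
        using xy unfolding norm_power norm_of_real by (intro power_le_one) auto
      moreover have "norm (1 - w u) \<le> 2"
        using wlt[OF True] norm_triangle_ineq4[of 1 "w u"] by simp
      ultimately have "norm (of_real (fst u * snd u) ^ n * (1 - w u)) \<le> 1 * 2"
        unfolding norm_mult by (intro mult_mono) auto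
      then show ?thesis unfolding Gn_eq norm_mult
        by (simp add: mult_right_mono)
    qed (simp add: Gn_def F_def)
  qed
  have intGn': "set_integrable lborel ({0<..<1} \<times> {0<..<1}) (gfun s (a + of_nat n))" for n
    using intGn[of n] unfolding Gn_def Q_def set_integrable_def .
  have valGn: "integral\<^sup>L lborel (Gn n) = C / (of_nat n + a) ^ s" for n
    using core(2)[OF s intGn'[of n]] unfolding Gn_def Q_def C_def set_lebesgue_integral_def
    by (simp add: add.commute)
  define S where "S = (\<lambda>N u. F u * (1 - w u ^ N))"
  have S_eq: "S N u = (\<Sum>n<N. z ^ n * Gn n u)" for N u
  proof -
    have "(\<Sum>n<N. z ^ n * Gn n u) = F u * ((1 - w u) * (\<Sum>n<N. w u ^ n))"
      unfolding Gn_eq w_def by (simp add: sum_distrib_left sum_distrib_right power_mult_distrib mult_ac)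
    also have "\<dots> = S N u" unfolding S_def one_diff_power_eq[symmetric] ..
    finally show ?thesis ..
  qed
  have intS: "integral\<^sup>L lborel (S N) = C * (\<Sum>n<N. z ^ n / (of_nat n + a) ^ s)" for N
  proof -
    have "integral\<^sup>L lborel (S N) = (\<Sum>n<N. z ^ n * integral\<^sup>L lborel (Gn n))"
    proof -
      have "integral\<^sup>L lborel (\<lambda>u. \<Sum>n<N. z ^ n * Gn n u) = (\<Sum>n<N. integral\<^sup>L lborel (\<lambda>u. z ^ n * Gn n u))"
        by (rule Bochner_Integration.integral_sum) (auto intro!: integrable_mult_right intGn)
      then show ?thesis unfolding S_eq[abs_def] by simp
    qed
    also have "\<dots> = C * (\<Sum>n<N. z ^ n / (of_nat n + a) ^ s)"
      by (simp add: valGn sum_distrib_left mult_ac)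
    finally show ?thesis .
  qed
  have lim1: "(\<lambda>N. integral\<^sup>L lborel (S N)) \<longlonglongrightarrow> integral\<^sup>L lborel F"
  proof (rule integral_dominated_convergence[where w = "\<lambda>u. 2 * norm (F u)"])
    show "F \<in> borel_measurable lborel" by (rule Fm)
    have Pm: "(\<lambda>u::real\<times>real. 1 - w u ^ N) \<in> borel_measurable lborel" for N
      unfolding w_def by (simp only: measurable_lborel2) (intro borel_measurable_continuous_onI continuous_intros)
    show "S N \<in> borel_measurable lborel" for N unfolding S_def by (rule borel_measurable_times[OF Fm Pm])
    show "integrable lborel (\<lambda>u. 2 * norm (F u))" using intF by simp
    show "AE u in lborel. (\<lambda>N. S N u) \<longlonglongrightarrow> F u"
    proof (rule AE_I2)
      fix u
      show "(\<lambda>N. S N u) \<longlonglongrightarrow> F u"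
      proof (cases "u \<in> Q")
        case True
        have "(\<lambda>N. F u * (1 - w u ^ N)) \<longlonglongrightarrow> F u * (1 - 0)"
          by (intro tendsto_intros LIMSEQ_power_zero wlt[OF True])
        then show ?thesis by (simp add: S_def)
      qed (simp add: S_def F_def)
    qed
    fix N
    show "AE u in lborel. norm (S N u) \<le> 2 * norm (F u)"
    proof (rule AE_I2)
      fix u
      show "norm (S N u) \<le> 2 * norm (F u)"
      proof (cases "u \<in> Q")
        case True
        have "norm (w u ^ N) \<le> 1" using wlt[OF True] by (simp add: norm_power power_le_one)
        then have "norm (1 - w u ^ N) \<le> 2" using norm_triangle_ineq4[of 1 "w u ^ N"] by simp
        then show ?thesis unfolding S_def norm_mult
          using mult_left_mono[of "norm (1 - w u ^ N)" 2 "norm (F u)"] by (simp add: mult.commute)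
      qed (simp add: S_def F_def)
    qed
  qed
  have lim2: "(\<lambda>N. integral\<^sup>L lborel (S N)) \<longlonglongrightarrow> C * lerch_phi z s a"
    unfolding intS lerch_phi_def
    by (intro tendsto_intros summable_LIMSEQ assms(3))
  have RHS: "set_lebesgue_integral lborel ({0<..<1} \<times> {0<..<1}) (lerch_integrand z s a) = C * lerch_phi z s a"
    using LIMSEQ_unique[OF lim1 lim2] unfolding set_lebesgue_integral_def F_def Q_def .
  have G: "Gamma (of_nat s :: complex) = fact (s - 1)"
    using Gamma_fact[of "s - 1"] s by (simp add: of_nat_diff)
  show ?thesis unfolding RHS G C_def
  proof -
    obtain m where sm: "s = Suc m" using s by (cases s) auto
    show "of_nat (s - 2) * (- 1) ^ s / of_nat s * lerch_phi z s a * fact (s - 1) =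
       - complex_of_real (real (s - 2) / real s) * ((- 1) ^ (s - 1) * fact (s - 1)) * lerch_phi z s a"
      unfolding sm by (simp add: field_simps)
  qed
qed


end
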